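(* Let $\omega(y)=\sum_{k\ge0}a_ky^k$ ($a_k\ge 0$, radius of convergence $R>0$) and let $V$ be the covariance of the power series distribution of $\omega$. Then for every $n\in\mathbb{N}$ and every constant $C>0$, the function $x\mapsto n^2V(x/n)$ is the covariance of the power series distribution of the function $C\omega(y^n)$.
   Context: For a power series $\omega$ with non-negative coefficients and radius of convergence $R>0$, the power series distribution (PSD) of $\omega$ with parameter $y\in(0,R)$ is the law on $\{0,1,2,\dots\}$ given by $P\{\xi=k\}=a_ky^k/\omega(y)$. Its mean is $x(y)=y\omega'(y)/\omega(y)$ and its variance is $y\,x'(y)>0$ (nondegenerate case), so $x(\cdot)$ has an inverse $y=f(x)$ on its range. The covariance of the PSD of $\omega$ is the function $V(x)=f(x)/f'(x)$, i.e. the variance expressed as a function of the mean $x$. *)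

theory Defs
  imports "HOL-Analysis.Analysis"
begin

definition pseries :: "(nat \<Rightarrow> real) \<Rightarrow> real \<Rightarrow> real" where
  "pseries a y = (\<Sum>k. a k * y ^ k)"

definition psd_params :: "(nat \<Rightarrow> real) \<Rightarrow> real set" where
  "psd_params a = {y. 0 < y \<and> ereal y < conv_radius a}"

definition psd_mean :: "(nat \<Rightarrow> real) \<Rightarrow> real \<Rightarrow> real" where
  "psd_mean a y = y * deriv (pseries a) y / pseries a y"

definition psd_mean_range :: "(nat \<Rightarrow> real) \<Rightarrow> real set" where
  "psd_mean_range a = psd_mean a ` psd_params a"

definition psd_inv_mean :: "(nat \<Rightarrow> real) \<Rightarrow> real \<Rightarrow> real" where
  "psd_inv_mean a = the_inv_into (psd_params a) (psd_mean a)"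

definition psd_covariance :: "(nat \<Rightarrow> real) \<Rightarrow> real \<Rightarrow> real" where
  "psd_covariance a x = psd_inv_mean a x / deriv (psd_inv_mean a) x"

end

theory Submission imports Defs "HOL-Complex_Analysis.Complex_Analysis" begin

lemma ps_fun: "pseries c = (\<lambda>z. \<Sum>k. c k * z ^ k)"
  by (rule ext) (simp add: pseries_def)

lemma ps_K:
  assumes "ereal \<bar>y\<bar> < conv_radius c"
  obtains K where "\<bar>y\<bar> < K" "ereal K < conv_radius c"
proof -
  from ereal_dense2[OF assms] obtain K where "ereal \<bar>y\<bar> < ereal K" "ereal K < conv_radius c" by blast
  thus ?thesis using that by auto
qed

lemma ps_deriv_sums:
  fixes c :: "nat \<Rightarrow> real"
  assumes y: "ereal \<bar>y\<bar> < conv_radius c"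
  shows "(pseries c has_real_derivative (\<Sum>k. diffs c k * y ^ k)) (at y)"
    and "(\<lambda>k. real k * c k * y ^ k) sums (y * (\<Sum>k. diffs c k * y ^ k))"
proof -
  obtain K where K: "\<bar>y\<bar> < K" "ereal K < conv_radius c" using ps_K[OF y] by blast
  have sK: "summable (\<lambda>k. c k * z ^ k)" if "norm z < K" for z :: real
  proof (rule summable_in_conv_radius)
    have "ereal (norm z) < ereal K" using that by simp
    also have "\<dots> < conv_radius c" by fact
    finally show "ereal (norm z) < conv_radius c" .
  qed
  show "(pseries c has_real_derivative (\<Sum>k. diffs c k * y ^ k)) (at y)"
    unfolding ps_fun by (rule termdiffs_strong'[OF sK]) (use K in auto)
  have sd: "summable (\<lambda>k. diffs c k * y ^ k)"
    by (rule termdiff_converges[OF _ sK]) (use K in auto)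
  have "(\<lambda>k. real k * c k * y ^ (k - Suc 0)) sums (\<Sum>k. diffs c k * y ^ k)"
    using diffs_equiv[OF sd] by simp
  from sums_mult[OF this, of y]
  have "(\<lambda>k. y * (real k * c k * y ^ (k - Suc 0))) sums (y * (\<Sum>k. diffs c k * y ^ k))" .
  moreover have "y * (real k * c k * y ^ (k - Suc 0)) = real k * c k * y ^ k" for k
    by (cases k) auto
  ultimately show "(\<lambda>k. real k * c k * y ^ k) sums (y * (\<Sum>k. diffs c k * y ^ k))" by simp
qed

lemma conv_radius_kc:
  fixes c :: "nat \<Rightarrow> real"
  shows "conv_radius (\<lambda>k. real k * c k) \<ge> conv_radius c"
proof (rule conv_radius_geI_ex')
  fix r :: real assume r: "0 < r" "ereal r < conv_radius c"
  then have "ereal \<bar>r\<bar> < conv_radius c" by simp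
  from sums_summable[OF ps_deriv_sums(2)[OF this]]
  show "summable (\<lambda>k. real k * c k * of_real r ^ k)" by simp
qed

lemma ps_deriv:
  fixes c :: "nat \<Rightarrow> real"
  assumes y: "ereal \<bar>y\<bar> < conv_radius c" and "y \<noteq> 0"
  shows "(pseries c has_real_derivative (pseries (\<lambda>k. real k * c k) y / y)) (at y)"
proof -
  have "pseries (\<lambda>k. real k * c k) y = y * (\<Sum>k. diffs c k * y ^ k)"
    using sums_unique[OF ps_deriv_sums(2)[OF y]] by (simp add: pseries_def)
  then show ?thesis using ps_deriv_sums(1)[OF y] assms(2) by simp
qed

lemma ps_summable:
  fixes c :: "nat \<Rightarrow> real"
  assumes y: "ereal \<bar>y\<bar> < conv_radius c"
  shows "(\<lambda>k. c k * y ^ k) sums pseries c y"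
  unfolding pseries_def by (rule summable_sums, rule summable_in_conv_radius) (use y in simp)

lemma open_params: "open (psd_params c)"
proof -
  have "psd_params c = {y. 0 < y} \<inter> {y. ereal y < (\<lambda>_. conv_radius c) y}"
    by (auto simp: psd_params_def)
  moreover have "open {y::real. 0 < y}" by (simp add: open_Collect_less)
  moreover have "open {y. ereal y < (\<lambda>_. conv_radius c) y}"
    by (rule open_Collect_less) (auto intro!: continuous_intros)
  ultimately show ?thesis by auto
qed

lemma params_radii:
  fixes c :: "nat \<Rightarrow> real"
  assumes "y \<in> psd_params c"
  shows "ereal \<bar>y\<bar> < conv_radius c" "ereal \<bar>y\<bar> < conv_radius (\<lambda>k. real k * c k)"
    "ereal \<bar>y\<bar> < conv_radius (\<lambda>k. real k * (real k * c k))" "y > 0"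
proof -
  show 1: "ereal \<bar>y\<bar> < conv_radius c" "y > 0" using assms by (auto simp: psd_params_def)
  show 2: "ereal \<bar>y\<bar> < conv_radius (\<lambda>k. real k * c k)"
    using 1 conv_radius_kc[of c] by (meson less_le_trans)
  show "ereal \<bar>y\<bar> < conv_radius (\<lambda>k. real k * (real k * c k))"
    using 2 conv_radius_kc[of "\<lambda>k. real k * c k"] by (meson less_le_trans)
qed

definition mder :: "(nat \<Rightarrow> real) \<Rightarrow> real \<Rightarrow> real" where
  "mder c y = (pseries (\<lambda>k. real k * (real k * c k)) y * pseries c y
     - (pseries (\<lambda>k. real k * c k) y)\<^sup>2) / (y * (pseries c y)\<^sup>2)"

lemma S0_pos:
  fixes c :: "nat \<Rightarrow> real"
  assumes nonneg: "\<And>k. c k \<ge> 0" and nondeg: "\<exists>i j. i \<noteq> j \<and> c i > 0 \<and> c j > 0"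
    and y: "y \<in> psd_params c"
  shows "pseries c y > 0"
proof -
  obtain i where i: "c i > 0" using nondeg by blast
  note r = params_radii[OF y]
  show ?thesis unfolding pseries_def
    by (rule suminf_pos2[of _ i]) (use ps_summable[OF r(1)] nonneg r(4) i in \<open>auto simp: sums_iff\<close>)
qed

lemma mean_eq:
  fixes c :: "nat \<Rightarrow> real"
  assumes y: "y \<in> psd_params c"
  shows "psd_mean c y = pseries (\<lambda>k. real k * c k) y / pseries c y"
proof -
  note r = params_radii[OF y]
  have "deriv (pseries c) y = pseries (\<lambda>k. real k * c k) y / y"
    by (rule DERIV_imp_deriv, rule ps_deriv) (use r in auto)
  then show ?thesis using r(4) by (simp add: psd_mean_def)
qed

lemma mean_deriv:
  fixes c :: "nat \<Rightarrow> real"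
  assumes nonneg: "\<And>k. c k \<ge> 0" and nondeg: "\<exists>i j. i \<noteq> j \<and> c i > 0 \<and> c j > 0"
    and y: "y \<in> psd_params c"
  shows "(psd_mean c has_real_derivative mder c y) (at y)" "mder c y > 0"
proof -
  note r = params_radii[OF y]
  define S0 where "S0 = pseries c y"
  define S1 where "S1 = pseries (\<lambda>k. real k * c k) y"
  define S2 where "S2 = pseries (\<lambda>k. real k * (real k * c k)) y"
  have S0: "S0 > 0" unfolding S0_def by (rule S0_pos[OF nonneg nondeg y])
  have d0: "(pseries c has_real_derivative S1 / y) (at y)"
    unfolding S1_def by (rule ps_deriv) (use r in auto)
  have d1: "(pseries (\<lambda>k. real k * c k) has_real_derivative S2 / y) (at y)"
    unfolding S2_def by (rule ps_deriv) (use r in auto)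
  have "((\<lambda>z. pseries (\<lambda>k. real k * c k) z / pseries c z) has_real_derivative
        (S2 / y * S0 - S1 * (S1 / y)) / (S0 * S0)) (at y)"
    using DERIV_divide[OF d1 d0] S0 unfolding S0_def S1_def by simp
  moreover have "(S2 / y * S0 - S1 * (S1 / y)) / (S0 * S0) = mder c y"
    unfolding mder_def S0_def[symmetric] S1_def[symmetric] S2_def[symmetric]
    using r(4) S0 by (simp add: field_simps power2_eq_square)
  ultimately have "((\<lambda>z. pseries (\<lambda>k. real k * c k) z / pseries c z) has_real_derivative mder c y) (at y)"
    by simp
  then show "(psd_mean c has_real_derivative mder c y) (at y)"
    by (rule has_field_derivative_transform_within_open[OF _ open_params y])
       (simp add: mean_eq)
  define m where "m = S1 / S0"
  have s0: "(\<lambda>k. c k * y ^ k) sums S0" unfolding S0_def by (rule ps_summable[OF r(1)])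
  have s1: "(\<lambda>k. real k * c k * y ^ k) sums S1" unfolding S1_def by (rule ps_summable[OF r(2)])
  have s2: "(\<lambda>k. real k * (real k * c k) * y ^ k) sums S2" unfolding S2_def by (rule ps_summable[OF r(3)])
  have "(\<lambda>k. real k * (real k * c k) * y ^ k - 2 * m * (real k * c k * y ^ k) + m\<^sup>2 * (c k * y ^ k))
        sums (S2 - 2 * m * S1 + m\<^sup>2 * S0)"
    by (intro sums_add sums_diff sums_mult s0 s1 s2)
  moreover have "real k * (real k * c k) * y ^ k - 2 * m * (real k * c k * y ^ k) + m\<^sup>2 * (c k * y ^ k)
     = c k * y ^ k * (real k - m)\<^sup>2" for k
    by (simp add: algebra_simps power2_eq_square)
  ultimately have sv: "(\<lambda>k. c k * y ^ k * (real k - m)\<^sup>2) sums (S2 - 2 * m * S1 + m\<^sup>2 * S0)" by simp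
  obtain i j where ij: "i \<noteq> j" "c i > 0" "c j > 0" using nondeg by blast
  have "real i \<noteq> m \<or> real j \<noteq> m" using ij(1) by auto
  then obtain l where l: "c l > 0" "real l \<noteq> m" using ij by blast
  have "0 < S2 - 2 * m * S1 + m\<^sup>2 * S0"
    using suminf_pos2[OF sums_summable[OF sv], of l] sums_unique[OF sv] nonneg r(4) l
    by (simp add: zero_le_mult_iff)
  then have "0 < S0 * (S2 - 2 * m * S1 + m\<^sup>2 * S0)" using S0 by simp
  also have "S0 * (S2 - 2 * m * S1 + m\<^sup>2 * S0) = S2 * S0 - S1\<^sup>2"
    unfolding m_def using S0 by (simp add: field_simps power2_eq_square)
  finally have "0 < S2 * S0 - S1\<^sup>2" .
  then show "mder c y > 0" unfolding mder_def S0_def[symmetric] S1_def[symmetric] S2_def[symmetric]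
    using r(4) S0 by simp
qed


lemma params_between:
  assumes "y1 \<in> psd_params c" "y2 \<in> psd_params c" "y1 \<le> x" "x \<le> y2"
  shows "x \<in> psd_params c"
  proof -
  have "ereal x \<le> ereal y2" using assms(4) by simp
  moreover have "ereal y2 < conv_radius c" using assms(2) by (simp add: psd_params_def)
  ultimately have "ereal x < conv_radius c" by (rule le_less_trans)
  then show ?thesis using assms by (auto simp: psd_params_def)
qed

lemma mean_inj:
  fixes c :: "nat \<Rightarrow> real"
  assumes nonneg: "\<And>k. c k \<ge> 0" and nondeg: "\<exists>i j. i \<noteq> j \<and> c i > 0 \<and> c j > 0"
  shows "inj_on (psd_mean c) (psd_params c)"
proof -
  have lt: "psd_mean c y1 < psd_mean c y2" if "y1 \<in> psd_params c" "y2 \<in> psd_params c" "y1 < y2" for y1 y2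
    by (rule DERIV_pos_imp_increasing[OF that(3)])
       (use mean_deriv[OF nonneg nondeg params_between[OF that(1,2)]] in blast)
  show ?thesis
  proof (rule inj_onI)
    fix u v assume "u \<in> psd_params c" "v \<in> psd_params c" "psd_mean c u = psd_mean c v"
    then show "u = v" using lt[of u v] lt[of v u] by (cases u v rule: linorder_cases) auto
  qed
qed

lemma cov_at:
  fixes c :: "nat \<Rightarrow> real"
  assumes nonneg: "\<And>k. c k \<ge> 0" and nondeg: "\<exists>i j. i \<noteq> j \<and> c i > 0 \<and> c j > 0"
    and y: "y \<in> psd_params c"
  shows "psd_inv_mean c (psd_mean c y) = y"
    "psd_covariance c (psd_mean c y) = y * mder c y"
proof -
  note inj = mean_inj[OF nonneg nondeg]
  have gf: "psd_inv_mean c (psd_mean c z) = z" if "z \<in> psd_params c" for z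
    unfolding psd_inv_mean_def by (rule the_inv_into_f_f[OF inj that])
  show "psd_inv_mean c (psd_mean c y) = y" by (rule gf[OF y])
  have cont: "continuous_on (psd_params c) (psd_mean c)"
    by (rule continuous_at_imp_continuous_on)
       (use mean_deriv(1)[OF nonneg nondeg] DERIV_isCont in blast)
  have "(psd_inv_mean c has_real_derivative inverse (mder c y)) (at (psd_mean c y))"
    by (rule has_field_derivative_inverse_strong[OF mean_deriv(1)[OF nonneg nondeg y] _ open_params y cont gf])
       (use mean_deriv(2)[OF nonneg nondeg y] in auto)
  then have "deriv (psd_inv_mean c) (psd_mean c y) = inverse (mder c y)" by (rule DERIV_imp_deriv)
  then show "psd_covariance c (psd_mean c y) = y * mder c y"
    unfolding psd_covariance_def gf[OF y] by (simp add: divide_inverse)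
qed


lemma reindex_sums:
  fixes d :: "nat \<Rightarrow> real"
  assumes n: "n \<ge> 1"
  shows "(\<lambda>k. (if n dvd k then d (k div n) else 0) * y ^ k) sums s \<longleftrightarrow> (\<lambda>j. d j * (y ^ n) ^ j) sums s"
proof -
  have sm: "strict_mono (\<lambda>j. n * j)" using n by (auto simp: strict_mono_def)
  have "(\<lambda>j. (\<lambda>k. (if n dvd k then d (k div n) else 0) * y ^ k) (n * j)) sums s
        \<longleftrightarrow> (\<lambda>k. (if n dvd k then d (k div n) else 0) * y ^ k) sums s"
    by (rule sums_mono_reindex[OF sm]) auto
  moreover have "(\<lambda>j. (\<lambda>k. (if n dvd k then d (k div n) else 0) * y ^ k) (n * j)) = (\<lambda>j. d j * (y ^ n) ^ j)"
    using n by (auto simp: power_mult)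
  ultimately show ?thesis by simp
qed

lemma div_aux: "(C::real) > 0 \<Longrightarrow> m * C * s / (C * t) = m * (s / t)"
  by (cases "t = 0") (simp_all add: field_simps)

theorem lemma4:
  fixes a :: "nat \<Rightarrow> real" and n :: nat and C :: real
  assumes nonneg: "\<And>k. a k \<ge> 0"
    and radius: "conv_radius a > 0"
    and nondeg: "\<exists>i j. i \<noteq> j \<and> a i > 0 \<and> a j > 0"
    and n: "n \<ge> 1"
    and C: "C > 0"
  defines "b \<equiv> (\<lambda>k. if n dvd k then C * a (k div n) else 0)"
  shows "(\<forall>y. ereal (\<bar>y\<bar> ^ n) < conv_radius a \<longrightarrow> pseries b y = C * pseries a (y ^ n))
    \<and> psd_mean_range b = (\<lambda>x. real n * x) ` psd_mean_range a
    \<and> (\<forall>x \<in> psd_mean_range b. psd_covariance b x = (real n)\<^sup>2 * psd_covariance a (x / real n))"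
proof -
  have bcoef: "b = (\<lambda>k. if n dvd k then (\<lambda>j. C * a j) (k div n) else 0)" by (simp add: b_def)
  have kb: "(\<lambda>k. real k * b k) = (\<lambda>k. if n dvd k then (\<lambda>j. real n * C * (real j * a j)) (k div n) else 0)"
    by (rule ext) (auto simp: b_def elim!: dvdE)
  have sumb: "(\<lambda>k. b k * y ^ k) sums s \<longleftrightarrow> (\<lambda>j. C * a j * (y ^ n) ^ j) sums s" for y s
    unfolding bcoef by (rule reindex_sums[OF n])
  have sumab: "summable (\<lambda>k. b k * y ^ k) \<longleftrightarrow> summable (\<lambda>j. a j * (y ^ n) ^ j)" for y
  proof -
    have "summable (\<lambda>k. b k * y ^ k) \<longleftrightarrow> summable (\<lambda>j. C * (a j * (y ^ n) ^ j))"
      proof -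
      have "\<And>s. (\<lambda>k. b k * y ^ k) sums s \<longleftrightarrow> (\<lambda>j. C * (a j * (y ^ n) ^ j)) sums s"
        using sumb by (simp add: mult.assoc)
      then show ?thesis unfolding summable_def by blast
    qed
    also have "\<dots> \<longleftrightarrow> summable (\<lambda>j. a j * (y ^ n) ^ j)" using C by (simp add: summable_cmult_iff)
    finally show ?thesis .
  qed
  have pb: "pseries b y = C * pseries a (y ^ n)" if "ereal (\<bar>y\<bar> ^ n) < conv_radius a" for y
  proof -
    have "ereal \<bar>y ^ n\<bar> < conv_radius a" using that by (simp add: power_abs)
    from sums_mult[OF ps_summable[OF this], of C]
    have "(\<lambda>k. b k * y ^ k) sums (C * pseries a (y ^ n))" using sumb by (simp add: mult.assoc)
    then show ?thesis by (simp add: pseries_def sums_iff)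
  qed
  have pkb: "pseries (\<lambda>k. real k * b k) y = real n * C * pseries (\<lambda>j. real j * a j) (y ^ n)"
    if "y ^ n \<in> psd_params a" for y
  proof -
    have "ereal \<bar>y ^ n\<bar> < conv_radius (\<lambda>j. real j * a j)" using params_radii(2)[OF that] .
    from sums_mult[OF ps_summable[OF this], of "real n * C"]
    have "(\<lambda>k. (if n dvd k then (\<lambda>j. real n * C * (real j * a j)) (k div n) else 0) * y ^ k)
       sums (real n * C * pseries (\<lambda>j. real j * a j) (y ^ n))"
      by (subst reindex_sums[OF n]) (simp add: mult.assoc)
    moreover have "(\<lambda>k. (if n dvd k then (\<lambda>j. real n * C * (real j * a j)) (k div n) else 0) * y ^ k)
       = (\<lambda>k. (real k * b k) * y ^ k)" by (rule ext) (simp only: fun_cong[OF kb])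
    ultimately have "(\<lambda>k. (real k * b k) * y ^ k) sums (real n * C * pseries (\<lambda>j. real j * a j) (y ^ n))"
      by simp
    then show ?thesis by (simp add: pseries_def sums_iff)
  qed
  have Pb: "y \<in> psd_params b \<longleftrightarrow> y > 0 \<and> y ^ n \<in> psd_params a" for y
  proof
    assume y: "y \<in> psd_params b"
    then have y0: "y > 0" and yR: "ereal y < conv_radius b" by (auto simp: psd_params_def)
    obtain r where r: "ereal y < ereal r" "ereal r < conv_radius b" using ereal_dense2[OF yR] by blast
    have r0: "r > 0" using r y0 by simp
    have "summable (\<lambda>k. b k * r ^ k)" by (rule summable_in_conv_radius) (use r r0 in simp)
    then have "summable (\<lambda>j. a j * (r ^ n) ^ j)" using sumab by simp
    then have "conv_radius a \<ge> norm (r ^ n)" by (rule conv_radius_geI)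
    moreover have "y ^ n < r ^ n" using r y0 n by (intro power_strict_mono) auto
    moreover have "norm (r ^ n) = r ^ n" using r0 by simp
    ultimately have 1: "ereal (r ^ n) \<le> conv_radius a" and 2: "ereal (y ^ n) < ereal (r ^ n)" by simp_all
    from 2 1 have "ereal (y ^ n) < conv_radius a" by (rule less_le_trans)
    then show "y > 0 \<and> y ^ n \<in> psd_params a" using y0 by (simp add: psd_params_def)
  next
    assume y: "y > 0 \<and> y ^ n \<in> psd_params a"
    then have y0: "y > 0" and yR: "ereal (y ^ n) < conv_radius a" by (auto simp: psd_params_def)
    obtain t where t: "ereal (y ^ n) < ereal t" "ereal t < conv_radius a" using ereal_dense2[OF yR] by blast
    have t0: "t > 0" using t y0 by (simp add: less_trans[OF zero_less_power[OF y0]])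
    define r where "r = root n t"
    have rn: "r ^ n = t" unfolding r_def using n t0 by (simp add: real_root_pow_pos2)
    have r0: "r > 0" unfolding r_def using n t0 by simp
    have yr: "y < r" using t rn r0 by (intro power_less_imp_less_base[of y n r]) auto
    have "summable (\<lambda>j. a j * t ^ j)" by (rule summable_in_conv_radius) (use t t0 in simp)
    then have "summable (\<lambda>k. b k * r ^ k)" using sumab rn by simp
    then have "conv_radius b \<ge> norm r" by (rule conv_radius_geI)
    then have "ereal r \<le> conv_radius b" using r0 by simp
    moreover have "ereal y < ereal r" using yr by simp
    ultimately have "ereal y < conv_radius b" by (rule less_le_trans[rotated])
    then show "y \<in> psd_params b" using y0 by (simp add: psd_params_def)
  qed
  have nonnegb: "\<And>k. b k \<ge> 0" using nonneg C by (simp add: b_def)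
  have nondegb: "\<exists>i j. i \<noteq> j \<and> b i > 0 \<and> b j > 0"
  proof -
    obtain i j where ij: "i \<noteq> j" "a i > 0" "a j > 0" using nondeg by blast
    have "n * i \<noteq> n * j" "b (n * i) > 0" "b (n * j) > 0" using ij n C by (auto simp: b_def)
    then show ?thesis by blast
  qed
  have mb: "psd_mean b y = real n * psd_mean a (y ^ n)" if y: "y \<in> psd_params b" for y
  proof -
    have ya: "y ^ n \<in> psd_params a" and y0: "y > 0" using Pb y by auto
    have "ereal (\<bar>y\<bar> ^ n) < conv_radius a" using params_radii(1)[OF ya] by (simp add: power_abs)
    then have "pseries b y = C * pseries a (y ^ n)" by (rule pb)
    then have "psd_mean b y = real n * C * pseries (\<lambda>j. real j * a j) (y ^ n) / (C * pseries a (y ^ n))"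
      using mean_eq[OF y] pkb[OF ya] by simp
    also have "\<dots> = real n * (pseries (\<lambda>j. real j * a j) (y ^ n) / pseries a (y ^ n))"
      using C by (rule div_aux)
    finally show ?thesis using mean_eq[OF ya] by simp
  qed
  show ?thesis
  proof (intro conjI ballI allI impI)
    show "pseries b y = C * pseries a (y ^ n)" if "ereal (\<bar>y\<bar> ^ n) < conv_radius a" for y
      using pb[OF that] .
  next
    show "psd_mean_range b = (\<lambda>x. real n * x) ` psd_mean_range a"
    proof
      show "psd_mean_range b \<subseteq> (\<lambda>x. real n * x) ` psd_mean_range a"
      proof
        fix x assume "x \<in> psd_mean_range b"
        then obtain y where y: "y \<in> psd_params b" "x = psd_mean b y" unfolding psd_mean_range_def by auto
        have "y ^ n \<in> psd_params a" using Pb y(1) by blast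
        then have "psd_mean a (y ^ n) \<in> psd_mean_range a" unfolding psd_mean_range_def by blast
        then show "x \<in> (\<lambda>x. real n * x) ` psd_mean_range a" using mb[OF y(1)] y(2) by blast
      qed
      show "(\<lambda>x. real n * x) ` psd_mean_range a \<subseteq> psd_mean_range b"
      proof
        fix x assume "x \<in> (\<lambda>x. real n * x) ` psd_mean_range a"
        then obtain z where z: "z \<in> psd_params a" "x = real n * psd_mean a z"
          unfolding psd_mean_range_def by auto
        define y where "y = root n z"
        have z0: "z > 0" using z by (simp add: psd_params_def)
        have yn: "y ^ n = z" unfolding y_def using n z0 by (simp add: real_root_pow_pos2)
        have y0: "y > 0" unfolding y_def using n z0 by simp
        have yb: "y \<in> psd_params b" using Pb yn y0 z by simp
        show "x \<in> psd_mean_range b" unfolding psd_mean_range_def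
          using mb[OF yb] yn z yb by (metis image_eqI)
      qed
    qed
  next
    fix x assume "x \<in> psd_mean_range b"
    then obtain y where y: "y \<in> psd_params b" and x: "x = psd_mean b y"
      unfolding psd_mean_range_def by auto
    have ya: "y ^ n \<in> psd_params a" and y0: "y > 0" using Pb y by auto
    have xn: "x / real n = psd_mean a (y ^ n)" using mb[OF y] x n by simp
    have d1: "((\<lambda>z. real n * psd_mean a (z ^ n)) has_real_derivative
        real n * (mder a (y ^ n) * (real n * y ^ (n - Suc 0)))) (at y)"
      by (intro DERIV_cmult DERIV_chain2[where g="\<lambda>z. z ^ n" and x=y, OF mean_deriv(1)[OF nonneg nondeg ya]] DERIV_pow)
    have d2: "(psd_mean b has_real_derivative
        real n * (mder a (y ^ n) * (real n * y ^ (n - Suc 0)))) (at y)"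
      by (rule has_field_derivative_transform_within_open[OF d1 open_params y]) (simp add: mb)
    have md: "mder b y = real n * (mder a (y ^ n) * (real n * y ^ (n - Suc 0)))"
      by (rule DERIV_unique[OF mean_deriv(1)[OF nonnegb nondegb y] d2])
    have yy: "y * y ^ (n - Suc 0) = y ^ n" using n by (cases n) auto
    have "y * (real n * (mder a (y ^ n) * (real n * y ^ (n - Suc 0))))
          = (real n * real n) * (mder a (y ^ n) * (y * y ^ (n - Suc 0)))" by (simp only: mult_ac)
    also have "\<dots> = (real n)\<^sup>2 * (y ^ n * mder a (y ^ n))"
      unfolding yy power2_eq_square by (simp only: mult_ac)
    finally have fin: "y * mder b y = (real n)\<^sup>2 * (y ^ n * mder a (y ^ n))" unfolding md .
    show "psd_covariance b x = (real n)\<^sup>2 * psd_covariance a (x / real n)"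
    proof -
      have "psd_covariance a (x / real n) = y ^ n * mder a (y ^ n)"
        unfolding xn by (rule cov_at(2)[OF nonneg nondeg ya])
      moreover have "psd_covariance b x = y * mder b y"
        unfolding x by (rule cov_at(2)[OF nonnegb nondegb y])
      ultimately show ?thesis using fin by simp
    qed
  qed
qed

end
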